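(* Let $\theta\in(0,1)$ be irrational, $k\ge1$ even, $\ell\ge1$, and $1\le i\le q_k$. (a) If $a_{k+j}=1$ for all $2\le j\le\ell$, then $$\#\{1\le j\le q_{k+\ell}: j\theta\in(i\theta-\|q_k\theta\|,\ i\theta+\tilde r_{k+1}\|q_k\theta\|+\|q_{k+1}\theta\|)\}\ge u_\ell\tilde r_{k+1}+u_{\ell+1}.$$ (b) If $a_{k+2}=2$ and $a_{k+j}=1$ for all $3\le j\le\ell$, then $$\#\{1\le j\le q_{k+\ell}: j\theta\in(i\theta-\|q_{k+1}\theta\|-\|q_{k+2}\theta\|,\ i\theta+\tilde r_{k+1}\|q_k\theta\|+\|q_{k+1}\theta\|)\}\ge u_{\ell+1}(\tilde r_{k+1}+1).$$
   Context: $\mathbb T=\mathbb R/\mathbb Z$, points identified with fractional parts; $(x-a,x+b)$ denotes the projection to $\mathbb T$ of the real interval. $\|t\|$ is the distance to the nearest integer. $\theta=[0;a_1,a_2,\dots]$ with convergent denominators $q_0=1$, $q_{k+1}=a_{k+1}q_k+q_{k-1}$. $(u_j)$ is the Fibonacci sequence $u_0=0,u_1=1,u_{j+1}=u_j+u_{j-1}$. For $k\ge0$: $r_{k+1}=\lfloor\sqrt{4a_{k+1}+5}\rfloor-3$ if $a_{k+1}\ne2$ and $r_{k+1}=1$ if $a_{k+1}=2$; $\tilde r_{k+1}=2$ if $a_{k+1}=4$ and $a_{k+2}\ge2$, and $\tilde r_{k+1}=r_{k+1}$ otherwise. *)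

theory Defs
  imports Complex_Main "HOL-Number_Theory.Fib"
begin

definition gauss :: "real \<Rightarrow> real" where
  "gauss x = frac (1 / x)"

text \<open>Partial quotients: cf_a theta n = a_n for n \<ge> 1 (cf_a theta 0 = 0, the integer part).\<close>
definition cf_a :: "real \<Rightarrow> nat \<Rightarrow> nat" where
  "cf_a \<theta> n = (if n = 0 then 0 else nat \<lfloor>1 / ((gauss ^^ (n - 1)) \<theta>)\<rfloor>)"

fun cf_q :: "real \<Rightarrow> nat \<Rightarrow> nat" where
  "cf_q \<theta> 0 = 1"
| "cf_q \<theta> (Suc 0) = cf_a \<theta> 1"
| "cf_q \<theta> (Suc (Suc n)) = cf_a \<theta> (Suc (Suc n)) * cf_q \<theta> (Suc n) + cf_q \<theta> n"

definition dnint :: "real \<Rightarrow> real" where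
  "dnint t = min (frac t) (1 - frac t)"

definition cf_r :: "real \<Rightarrow> nat \<Rightarrow> nat" where
  "cf_r \<theta> m = (if cf_a \<theta> m = 2 then 1 else nat \<lfloor>sqrt (4 * real (cf_a \<theta> m) + 5)\<rfloor> - 3)"

definition cf_rt :: "real \<Rightarrow> nat \<Rightarrow> nat" where
  "cf_rt \<theta> m = (if cf_a \<theta> m = 4 \<and> cf_a \<theta> (m + 1) \<ge> 2 then 2 else cf_r \<theta> m)"

text \<open>y (mod 1) lies in the projection to the torus of the real interval (x - a, x + b).\<close>
definition torus_in :: "real \<Rightarrow> real \<Rightarrow> real \<Rightarrow> real \<Rightarrow> bool" where
  "torus_in y x a b \<longleftrightarrow> (\<exists>n::int. x - a < y + of_int n \<and> y + of_int n < x + b)"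

end

theory Submission
  imports Defs
begin


definition xx :: "real \<Rightarrow> nat \<Rightarrow> real" where "xx \<theta> n = (gauss ^^ n) \<theta>"

lemma xx_Suc: "xx \<theta> (Suc n) = frac (1 / xx \<theta> n)"
  by (simp add: xx_def gauss_def)

lemma xx_props:
  assumes "0 < \<theta>" "\<theta> < 1" "\<theta> \<notin> \<rat>"
  shows "0 < xx \<theta> n \<and> xx \<theta> n < 1 \<and> xx \<theta> n \<notin> \<rat>"
proof (induction n)
  case 0 then show ?case using assms by (simp add: xx_def)
next
  case (Suc n)
  define y where "y = xx \<theta> n"
  have y: "0 < y" "y < 1" "y \<notin> \<rat>" using Suc unfolding y_def by auto
  have iy: "1 / y \<notin> \<rat>"
  proof
    assume "1 / y \<in> \<rat>"
    then have "1 / (1 / y) \<in> \<rat>" by (rule Rats_divide[OF Rats_1])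
    then show False using y by simp
  qed
  have fr: "frac (1/y) \<notin> \<rat>"
  proof
    assume h: "frac (1/y) \<in> \<rat>"
    have "1/y = frac (1/y) + of_int \<lfloor>1/y\<rfloor>" by (simp add: frac_def)
    also have "\<dots> \<in> \<rat>" using h by (intro Rats_add) auto
    finally show False using iy by simp
  qed
  have "frac (1/y) \<noteq> 0" using fr by (metis Rats_0)
  then have "0 < frac (1/y)" using frac_ge_0[of "1/y"] by linarith
  moreover have "frac (1/y) < 1" by (rule frac_lt_1)
  ultimately show ?case using fr by (simp add: xx_Suc y_def)
qed

lemma cf_a_Suc: "cf_a \<theta> (Suc n) = nat \<lfloor>1 / xx \<theta> n\<rfloor>"
  by (simp add: cf_a_def xx_def)

lemma cf_a_real:
  assumes "0 < \<theta>" "\<theta> < 1" "\<theta> \<notin> \<rat>"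
  shows "real (cf_a \<theta> (Suc n)) = 1 / xx \<theta> n - xx \<theta> (Suc n)"
    and "cf_a \<theta> (Suc n) \<ge> 1"
proof -
  have y: "0 < xx \<theta> n" "xx \<theta> n < 1" using xx_props[OF assms] by auto
  then have g: "1 < 1 / xx \<theta> n" by simp
  then have f: "\<lfloor>1 / xx \<theta> n\<rfloor> \<ge> 1" by (simp add: one_le_floor)
  have "real (nat \<lfloor>1 / xx \<theta> n\<rfloor>) = of_int \<lfloor>1 / xx \<theta> n\<rfloor>"
    using f by (intro of_nat_nat) linarith
  then show "real (cf_a \<theta> (Suc n)) = 1 / xx \<theta> n - xx \<theta> (Suc n)"
    by (simp add: cf_a_Suc xx_Suc frac_def)
  show "cf_a \<theta> (Suc n) \<ge> 1" using f y unfolding cf_a_Suc by (subst le_nat_iff) auto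
qed

fun cf_p :: "real \<Rightarrow> nat \<Rightarrow> int" where
  "cf_p \<theta> 0 = 0"
| "cf_p \<theta> (Suc 0) = 1"
| "cf_p \<theta> (Suc (Suc n)) = int (cf_a \<theta> (Suc (Suc n))) * cf_p \<theta> (Suc n) + cf_p \<theta> n"

definition PP :: "real \<Rightarrow> nat \<Rightarrow> real" where "PP \<theta> n = (\<Prod>m\<le>n. xx \<theta> m)"

lemma PP_Suc: "PP \<theta> (Suc n) = PP \<theta> n * xx \<theta> (Suc n)"
  by (simp add: PP_def)

lemma PP_0: "PP \<theta> 0 = \<theta>" by (simp add: PP_def xx_def)

lemma PP_pos:
  assumes "0 < \<theta>" "\<theta> < 1" "\<theta> \<notin> \<rat>"
  shows "0 < PP \<theta> n"
  using xx_props[OF assms] assms by (induction n) (auto simp: PP_Suc PP_0)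

lemma PP_rec:
  assumes "0 < \<theta>" "\<theta> < 1" "\<theta> \<notin> \<rat>"
  shows "PP \<theta> (Suc (Suc n)) + real (cf_a \<theta> (Suc (Suc n))) * PP \<theta> (Suc n) = PP \<theta> n"
proof -
  have y: "0 < xx \<theta> (Suc n)" using xx_props[OF assms] by auto
  show ?thesis using y
    by (simp add: PP_Suc cf_a_real[OF assms] field_simps)
qed

lemma cf_e:
  assumes "0 < \<theta>" "\<theta> < 1" "\<theta> \<notin> \<rat>"
  shows "real (cf_q \<theta> n) * \<theta> - of_int (cf_p \<theta> n) = (-1) ^ n * PP \<theta> n"
proof (induction n rule: fib.induct)
  case 1 show ?case by (simp add: PP_0)
next
  case 2
  have y: "0 < xx \<theta> 0" using xx_props[OF assms] by auto
  show ?case using y by (simp add: PP_Suc PP_0 cf_a_real[OF assms] field_simps xx_def)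
next
  case (3 n)
  have "real (cf_q \<theta> (Suc (Suc n))) * \<theta> - of_int (cf_p \<theta> (Suc (Suc n)))
      = real (cf_a \<theta> (Suc (Suc n))) * (real (cf_q \<theta> (Suc n)) * \<theta> - of_int (cf_p \<theta> (Suc n)))
        + (real (cf_q \<theta> n) * \<theta> - of_int (cf_p \<theta> n))"
    by (simp add: algebra_simps)
  also have "\<dots> = real (cf_a \<theta> (Suc (Suc n))) * ((-1) ^ Suc n * PP \<theta> (Suc n)) + (-1) ^ n * PP \<theta> n"
    using 3(1) 3(2) by simp
  also have "\<dots> = (-1) ^ n * (PP \<theta> n - real (cf_a \<theta> (Suc (Suc n))) * PP \<theta> (Suc n))"
    by (simp add: algebra_simps)
  also have "PP \<theta> n - real (cf_a \<theta> (Suc (Suc n))) * PP \<theta> (Suc n) = PP \<theta> (Suc (Suc n))"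
    using PP_rec[OF assms, of n] by linarith
  also have "(-1) ^ n * PP \<theta> (Suc (Suc n)) = (-1) ^ Suc (Suc n) * PP \<theta> (Suc (Suc n))" by simp
  finally show ?case .
qed


context
  fixes \<theta> :: real
  assumes th: "0 < \<theta>" "\<theta> < 1" "\<theta> \<notin> \<rat>"
begin

lemma PP_dec: "PP \<theta> (Suc n) < PP \<theta> n"
  using xx_props[OF th, of "Suc n"] PP_pos[OF th, of n] by (simp add: PP_Suc)

lemma PP_antimono: "m \<le> n \<Longrightarrow> PP \<theta> n \<le> PP \<theta> m"
proof (induction n rule: dec_induct)
  case base then show ?case by simp
next
  case (step n) then show ?case using PP_dec[of n] by linarith
qed

lemma PP_1: "PP \<theta> 1 < 1/2"
proof -
  have a: "real (cf_a \<theta> 1) = 1/\<theta> - xx \<theta> 1" "cf_a \<theta> 1 \<ge> 1"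
    using cf_a_real[OF th, of 0] by (auto simp: xx_def)
  have e: "PP \<theta> 1 = 1 - real (cf_a \<theta> 1) * \<theta>"
    using a th by (simp add: PP_Suc PP_0 field_simps)
  have "real (cf_a \<theta> 1) * \<theta> \<ge> \<theta>" using a(2) th by simp
  moreover have "PP \<theta> 1 < \<theta>" using PP_dec[of 0] by (simp add: PP_0)
  ultimately show ?thesis using e by linarith
qed

lemma PP_half: "n \<ge> 1 \<Longrightarrow> PP \<theta> n < 1/2"
  using PP_antimono[of 1 n] PP_1 by linarith

lemma dnint_q: assumes "n \<ge> 1" shows "dnint (real (cf_q \<theta> n) * \<theta>) = PP \<theta> n"
proof -
  have e: "real (cf_q \<theta> n) * \<theta> = of_int (cf_p \<theta> n) + (-1) ^ n * PP \<theta> n"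
    using cf_e[OF th, of n] by simp
  have P: "0 < PP \<theta> n" "PP \<theta> n < 1/2" using PP_pos[OF th] PP_half[OF assms] by auto
  show ?thesis
  proof (cases "even n")
    case True
    have "\<lfloor>real (cf_q \<theta> n) * \<theta>\<rfloor> = cf_p \<theta> n"
      using P True by (intro floor_unique) (auto simp: e)
    then have "frac (real (cf_q \<theta> n) * \<theta>) = PP \<theta> n" using True by (simp add: frac_def e)
    then show ?thesis using P by (simp add: dnint_def)
  next
    case False
    have "\<lfloor>real (cf_q \<theta> n) * \<theta>\<rfloor> = cf_p \<theta> n - 1"
      using P False by (intro floor_unique) (auto simp: e)
    then have "frac (real (cf_q \<theta> n) * \<theta>) = 1 - PP \<theta> n" using False by (simp add: frac_def e)
    then show ?thesis using P by (simp add: dnint_def)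
  qed
qed

lemma cf_a_ge1: "n \<ge> 1 \<Longrightarrow> cf_a \<theta> n \<ge> 1"
  using cf_a_real(2)[OF th, of "n - 1"] by simp

lemma q_ge1: "cf_q \<theta> n \<ge> 1"
proof (induction n rule: fib.induct)
  case 1 then show ?case by simp
next
  case 2 then show ?case using cf_a_ge1[of 1] by simp
next
  case (3 n) then show ?case by simp
qed

lemma q_rec_ge: "cf_q \<theta> (Suc (Suc n)) \<ge> cf_q \<theta> (Suc n) + cf_q \<theta> n"
proof -
  have "cf_a \<theta> (Suc (Suc n)) * cf_q \<theta> (Suc n) \<ge> 1 * cf_q \<theta> (Suc n)"
    using cf_a_ge1[of "Suc (Suc n)"] by (intro mult_right_mono) auto
  then show ?thesis by simp
qed

lemma q_step: assumes "k \<ge> 1" shows "cf_q \<theta> (k + 1) \<ge> cf_a \<theta> (k + 1) * cf_q \<theta> k"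
proof -
  obtain m where k: "k = Suc m" using assms by (cases k) auto
  show ?thesis by (simp add: k)
qed

lemma q_rec_eq: "cf_q \<theta> (Suc (Suc n)) = cf_a \<theta> (Suc (Suc n)) * cf_q \<theta> (Suc n) + cf_q \<theta> n"
  by simp

lemma PP_rec2: "PP \<theta> (Suc (Suc n)) + PP \<theta> (Suc n) \<le> PP \<theta> n"
proof -
  have "1 * PP \<theta> (Suc n) \<le> real (cf_a \<theta> (Suc (Suc n))) * PP \<theta> (Suc n)"
    using cf_a_ge1[of "Suc (Suc n)"] PP_pos[OF th, of "Suc n"] by (intro mult_right_mono) auto
  then show ?thesis using PP_rec[OF th, of n] by linarith
qed

end

lemma rt_bound: assumes "cf_a \<theta> m \<ge> 1" shows "cf_rt \<theta> m + 1 \<le> cf_a \<theta> m"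
proof -
  define a where "a = cf_a \<theta> m"
  have a1: "a \<ge> 1" using assms a_def by simp
  have h: "0 \<le> real a * real a" by simp
  have "(real a + 3)^2 = real a * real a + 6 * real a + 9" by (simp add: power2_eq_square algebra_simps)
  then have "4 * real a + 5 < (real a + 3)^2" using h by linarith
  then have "sqrt (4 * real a + 5) < sqrt ((real a + 3)^2)"
    by (intro real_sqrt_less_mono)
  then have "sqrt (4 * real a + 5) < real a + 3" by simp
  then have "\<lfloor>sqrt (4 * real a + 5)\<rfloor> \<le> int a + 2" by linarith
  then have "nat \<lfloor>sqrt (4 * real a + 5)\<rfloor> - 3 + 1 \<le> a" using a1 by linarith
  then show ?thesis using a1
    by (auto simp: cf_rt_def cf_r_def a_def[symmetric])
qed



fun xs :: "(nat \<Rightarrow> nat) \<Rightarrow> nat set \<Rightarrow> nat set \<Rightarrow> nat \<Rightarrow> nat set" where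
  "xs Q A B 0 = A"
| "xs Q A B (Suc 0) = B"
| "xs Q A B (Suc (Suc n)) = xs Q A B (Suc n) \<union> (\<lambda>c. Q (Suc n) + c) ` xs Q A B n"

definition good :: "real \<Rightarrow> nat \<Rightarrow> real \<Rightarrow> real \<Rightarrow> nat \<Rightarrow> nat \<Rightarrow> bool" where
  "good \<theta> k Lo Hi s c \<longleftrightarrow> c + cf_q \<theta> k \<le> cf_q \<theta> (k + s + 1) \<and>
     (\<exists>z::int. - Lo + PP \<theta> (k + s + 1) \<le> real c * \<theta> - of_int z \<and>
               real c * \<theta> - of_int z \<le> Hi - PP \<theta> (k + s + 1))"

lemma neg1_pow: "(-1::real) ^ m = 1 \<or> (-1::real) ^ m = -1"
  by (cases "even m") auto

context
  fixes \<theta> :: real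
  assumes th: "0 < \<theta>" "\<theta> < 1" "\<theta> \<notin> \<rat>"
begin

lemma good_mono: "good \<theta> k Lo Hi s c \<Longrightarrow> good \<theta> k Lo Hi (Suc s) c"
  unfolding good_def
proof (elim conjE exE, intro conjI exI)
  fix z :: int
  assume h: "c + cf_q \<theta> k \<le> cf_q \<theta> (k + s + 1)"
     "- Lo + PP \<theta> (k + s + 1) \<le> real c * \<theta> - real_of_int z"
     "real c * \<theta> - real_of_int z \<le> Hi - PP \<theta> (k + s + 1)"
  have e1: "k + Suc s + 1 = Suc (Suc (k + s))" "k + s + 1 = Suc (k + s)" by simp_all
  have "cf_q \<theta> (k + s + 1) \<le> cf_q \<theta> (k + Suc s + 1)"
    using q_rec_ge[OF th, of "k + s"] unfolding e1 by linarith
  then show "c + cf_q \<theta> k \<le> cf_q \<theta> (k + Suc s + 1)" using h by linarith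
  have "PP \<theta> (k + Suc s + 1) \<le> PP \<theta> (k + s + 1)" using PP_dec[OF th, of "k+s+1"] by simp
  then show "- Lo + PP \<theta> (k + Suc s + 1) \<le> real c * \<theta> - real_of_int z"
    "real c * \<theta> - real_of_int z \<le> Hi - PP \<theta> (k + Suc s + 1)" using h by linarith+
qed

lemma good_shift:
  assumes "good \<theta> k Lo Hi s c"
  shows "good \<theta> k Lo Hi (Suc (Suc s)) (cf_q \<theta> (k + s + 2) + c)"
proof -
  obtain z :: int where h: "c + cf_q \<theta> k \<le> cf_q \<theta> (k + s + 1)"
     "- Lo + PP \<theta> (k + s + 1) \<le> real c * \<theta> - real_of_int z"
     "real c * \<theta> - real_of_int z \<le> Hi - PP \<theta> (k + s + 1)"
    using assms unfolding good_def by blast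
  have q: "cf_q \<theta> (k + s + 2) + cf_q \<theta> (k + s + 1) \<le> cf_q \<theta> (k + Suc (Suc s) + 1)"
  proof -
    have e1: "k + Suc (Suc s) + 1 = Suc (Suc (k + s + 1))" "k + s + 2 = Suc (k + s + 1)" by simp_all
    show ?thesis using q_rec_ge[OF th, of "k + s + 1"] unfolding e1 by linarith
  qed
  have P: "PP \<theta> (k + s + 3) + PP \<theta> (k + s + 2) \<le> PP \<theta> (k + s + 1)"
    using PP_rec2[OF th, of "k + s + 1"] by (simp add: numeral_eq_Suc)
  define E where "E = real (cf_q \<theta> (k + s + 2)) * \<theta> - of_int (cf_p \<theta> (k + s + 2))"
  have E: "E = PP \<theta> (k + s + 2) \<or> E = - PP \<theta> (k + s + 2)"
    using cf_e[OF th, of "k + s + 2"] neg1_pow[of "k + s + 2"] unfolding E_def by auto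
  have v: "real (cf_q \<theta> (k + s + 2) + c) * \<theta> - of_int (z + cf_p \<theta> (k + s + 2))
      = (real c * \<theta> - of_int z) + E"
    unfolding E_def by (simp add: algebra_simps)
  have e3: "k + Suc (Suc s) + 1 = k + s + 3" by simp
  show ?thesis unfolding good_def e3
  proof (intro conjI exI)
    show "cf_q \<theta> (k + s + 2) + c + cf_q \<theta> k \<le> cf_q \<theta> (k + s + 3)"
      using q h(1) unfolding e3 by linarith
    show "- Lo + PP \<theta> (k + s + 3) \<le> real (cf_q \<theta> (k + s + 2) + c) * \<theta> - of_int (z + cf_p \<theta> (k + s + 2))"
      unfolding v using E P h PP_pos[OF th, of "k+s+2"] by linarith
    show "real (cf_q \<theta> (k + s + 2) + c) * \<theta> - of_int (z + cf_p \<theta> (k + s + 2)) \<le> Hi - PP \<theta> (k + s + 3)"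
      unfolding v using E P h PP_pos[OF th, of "k+s+2"] by linarith
  qed
qed

lemma xs_inv:
  assumes "finite A" "finite B" "\<forall>c\<in>A. good \<theta> k Lo Hi 0 c" "\<forall>c\<in>B. good \<theta> k Lo Hi 1 c"
  shows "finite (xs (\<lambda>m. cf_q \<theta> (k + m + 1)) A B s) \<and>
         (\<forall>c\<in>xs (\<lambda>m. cf_q \<theta> (k + m + 1)) A B s. good \<theta> k Lo Hi s c)"
proof (induction s rule: fib.induct)
  case 1 then show ?case using assms by simp
next
  case 2 then show ?case using assms by simp
next
  case (3 n)
  have a: "\<forall>c\<in>xs (\<lambda>m. cf_q \<theta> (k + m + 1)) A B (Suc n). good \<theta> k Lo Hi (Suc (Suc n)) c"
    using 3(1) good_mono by blast
  have b: "\<forall>c\<in>xs (\<lambda>m. cf_q \<theta> (k + m + 1)) A B n. good \<theta> k Lo Hi (Suc (Suc n)) (cf_q \<theta> (k + n + 2) + c)"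
    using 3(2) good_shift by blast
  show ?case using 3 a b by (auto simp: add.assoc)
qed

lemma xs_card:
  assumes "finite A" "finite B" "\<forall>c\<in>A. good \<theta> k Lo Hi 0 c" "\<forall>c\<in>B. good \<theta> k Lo Hi 1 c"
  shows "card (xs (\<lambda>m. cf_q \<theta> (k + m + 1)) A B (Suc (Suc n))) =
         card (xs (\<lambda>m. cf_q \<theta> (k + m + 1)) A B (Suc n)) + card (xs (\<lambda>m. cf_q \<theta> (k + m + 1)) A B n)"
proof -
  let ?X = "xs (\<lambda>m. cf_q \<theta> (k + m + 1)) A B"
  have i1: "finite (?X (Suc n))" "\<forall>c\<in>?X (Suc n). good \<theta> k Lo Hi (Suc n) c"
    using xs_inv[OF assms, of "Suc n"] by auto
  have i0: "finite (?X n)" using xs_inv[OF assms, of n] by auto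
  have qk: "cf_q \<theta> k \<ge> 1" by (rule q_ge1[OF th])
  have d: "?X (Suc n) \<inter> (\<lambda>c. cf_q \<theta> (k + Suc n + 1) + c) ` ?X n = {}"
  proof -
    { fix c assume "c \<in> ?X (Suc n)"
      then have "c + cf_q \<theta> k \<le> cf_q \<theta> (k + Suc n + 1)" using i1 by (auto simp: good_def)
      then have "c < cf_q \<theta> (k + Suc n + 1)" using qk by linarith }
    then show ?thesis by fastforce
  qed
  have "card (?X (Suc (Suc n))) = card (?X (Suc n)) + card ((\<lambda>c. cf_q \<theta> (k + Suc n + 1) + c) ` ?X n)"
    using d i1 i0 by (simp add: card_Un_disjoint)
  also have "card ((\<lambda>c. cf_q \<theta> (k + Suc n + 1) + c) ` ?X n) = card (?X n)"
    by (rule card_image) (simp add: inj_on_def)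
  finally show ?thesis .
qed

lemma count_ge:
  assumes "finite A" "finite B" "\<forall>c\<in>A. good \<theta> k Lo Hi 0 c" "\<forall>c\<in>B. good \<theta> k Lo Hi 1 c"
    and "l \<ge> 1" "1 \<le> i" "i \<le> cf_q \<theta> k"
  shows "card {j \<in> {1..cf_q \<theta> (k + l)}. torus_in (real j * \<theta>) (real i * \<theta>) Lo Hi}
         \<ge> card (xs (\<lambda>m. cf_q \<theta> (k + m + 1)) A B (l - 1))"
proof -
  let ?X = "xs (\<lambda>m. cf_q \<theta> (k + m + 1)) A B (l - 1)"
  have inv: "finite ?X" "\<forall>c\<in>?X. good \<theta> k Lo Hi (l - 1) c" using xs_inv[OF assms(1-4)] by auto
  have kl: "k + (l - 1) + 1 = k + l" using assms(5) by simp
  have sub: "(\<lambda>c. i + c) ` ?X \<subseteq> {j \<in> {1..cf_q \<theta> (k + l)}. torus_in (real j * \<theta>) (real i * \<theta>) Lo Hi}"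
  proof
    fix j assume "j \<in> (\<lambda>c. i + c) ` ?X"
    then obtain c where c: "c \<in> ?X" "j = i + c" by auto
    obtain z :: int where h: "c + cf_q \<theta> k \<le> cf_q \<theta> (k + l)"
      "- Lo + PP \<theta> (k + l) \<le> real c * \<theta> - of_int z"
      "real c * \<theta> - of_int z \<le> Hi - PP \<theta> (k + l)"
      using inv(2) c(1) unfolding good_def kl by blast
    have P: "0 < PP \<theta> (k + l)" by (rule PP_pos[OF th])
    have t: "torus_in (real j * \<theta>) (real i * \<theta>) Lo Hi"
      unfolding torus_in_def
    proof (intro exI conjI)
      have "real j * \<theta> + of_int (- z) = real i * \<theta> + (real c * \<theta> - of_int z)"
        using c(2) by (simp add: algebra_simps)
      then show "real i * \<theta> - Lo < real j * \<theta> + of_int (- z)"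
        "real j * \<theta> + of_int (- z) < real i * \<theta> + Hi" using h P by linarith+
    qed
    show "j \<in> {j \<in> {1..cf_q \<theta> (k + l)}. torus_in (real j * \<theta>) (real i * \<theta>) Lo Hi}"
      using t c(2) h(1) assms(6,7) by auto
  qed
  have "card ?X = card ((\<lambda>c. i + c) ` ?X)" by (rule card_image[symmetric]) (simp add: inj_on_def)
  also have "\<dots> \<le> card {j \<in> {1..cf_q \<theta> (k + l)}. torus_in (real j * \<theta>) (real i * \<theta>) Lo Hi}"
    by (rule card_mono[OF _ sub]) simp
  finally show ?thesis .
qed

end


theorem lemma4p3:
  fixes \<theta> :: real and k l i :: nat
  assumes "0 < \<theta>" "\<theta> < 1" "\<theta> \<notin> \<rat>"
    and "k \<ge> 1" "even k" "l \<ge> 1" "1 \<le> i" "i \<le> cf_q \<theta> k"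
  shows "((\<forall>j. 2 \<le> j \<and> j \<le> l \<longrightarrow> cf_a \<theta> (k + j) = 1) \<longrightarrow>
           card {j \<in> {1..cf_q \<theta> (k + l)}.
                   torus_in (real j * \<theta>) (real i * \<theta>) (dnint (real (cf_q \<theta> k) * \<theta>))
                     (real (cf_rt \<theta> (k + 1)) * dnint (real (cf_q \<theta> k) * \<theta>)
                       + dnint (real (cf_q \<theta> (k + 1)) * \<theta>))}
             \<ge> fib l * cf_rt \<theta> (k + 1) + fib (l + 1))
       \<and> ((cf_a \<theta> (k + 2) = 2 \<and> (\<forall>j. 3 \<le> j \<and> j \<le> l \<longrightarrow> cf_a \<theta> (k + j) = 1)) \<longrightarrow>
           card {j \<in> {1..cf_q \<theta> (k + l)}.
                   torus_in (real j * \<theta>) (real i * \<theta>)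
                     (dnint (real (cf_q \<theta> (k + 1)) * \<theta>) + dnint (real (cf_q \<theta> (k + 2)) * \<theta>))
                     (real (cf_rt \<theta> (k + 1)) * dnint (real (cf_q \<theta> k) * \<theta>)
                       + dnint (real (cf_q \<theta> (k + 1)) * \<theta>))}
             \<ge> fib (l + 1) * (cf_rt \<theta> (k + 1) + 1))"
proof -
  note th = assms(1-3)
  define r where "r = cf_rt \<theta> (k + 1)"
  define Q where "Q = (\<lambda>m. cf_q \<theta> (k + m + 1))"
  define T where "T = (\<lambda>t. t * cf_q \<theta> k) ` {0..r}"
  have dk: "dnint (real (cf_q \<theta> k) * \<theta>) = PP \<theta> k" using dnint_q[OF th assms(4)] .
  have dk1: "dnint (real (cf_q \<theta> (k + 1)) * \<theta>) = PP \<theta> (k + 1)" using dnint_q[OF th, of "k+1"] by simp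
  have dk2: "dnint (real (cf_q \<theta> (k + 2)) * \<theta>) = PP \<theta> (k + 2)" using dnint_q[OF th, of "k+2"] by simp
  have P0: "0 < PP \<theta> k" "PP \<theta> (k + 1) < PP \<theta> k" "0 < PP \<theta> (k + 1)"
    "PP \<theta> (k + 2) < PP \<theta> (k + 1)" "0 < PP \<theta> (k + 2)"
    using PP_pos[OF th] PP_dec[OF th, of k] PP_dec[OF th, of "k+1"] by auto
  have Prec: "PP \<theta> (k + 2) + PP \<theta> (k + 1) \<le> PP \<theta> k"
    using PP_rec2[OF th, of k] by (simp add: numeral_eq_Suc)
  have ek: "real (cf_q \<theta> k) * \<theta> - of_int (cf_p \<theta> k) = PP \<theta> k"
    using cf_e[OF th, of k] assms(5) by simp
  have ek1: "real (cf_q \<theta> (k + 1)) * \<theta> - of_int (cf_p \<theta> (k + 1)) = - PP \<theta> (k + 1)"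
    using cf_e[OF th, of "k + 1"] assms(5) by simp
  have qk: "cf_q \<theta> k \<ge> 1" by (rule q_ge1[OF th])
  have rq: "(r + 1) * cf_q \<theta> k \<le> cf_q \<theta> (k + 1)"
  proof -
    have "r + 1 \<le> cf_a \<theta> (k + 1)" unfolding r_def using rt_bound cf_a_ge1[OF th, of "k+1"] by simp
    then have "(r + 1) * cf_q \<theta> k \<le> cf_a \<theta> (k + 1) * cf_q \<theta> k" by (rule mult_right_mono) simp
    then show ?thesis using q_step[OF th assms(4)] by linarith
  qed
  have q2: "cf_q \<theta> (k + 2) = cf_a \<theta> (k + 2) * cf_q \<theta> (k + 1) + cf_q \<theta> k"
  proof -
    have e: "k + 2 = Suc (Suc k)" "k + 1 = Suc k" by simp_all
    show ?thesis unfolding e by (rule q_rec_eq[OF th])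
  qed
  have a2: "cf_a \<theta> (k + 2) \<ge> 1" using cf_a_ge1[OF th, of "k+2"] by simp
  have q2ge: "cf_q \<theta> (k + 1) + cf_q \<theta> k \<le> cf_q \<theta> (k + 2)"
  proof -
    have "1 * cf_q \<theta> (k + 1) \<le> cf_a \<theta> (k + 2) * cf_q \<theta> (k + 1)" using a2 by (rule mult_right_mono) simp
    then show ?thesis using q2 by linarith
  qed
  have Tel: "c + cf_q \<theta> k \<le> cf_q \<theta> (k + 1) \<and>
      real c * \<theta> - of_int (int t * cf_p \<theta> k) = real t * PP \<theta> k \<and> real t * PP \<theta> k \<le> real r * PP \<theta> k
      \<and> 0 \<le> real t * PP \<theta> k"
    if "t \<le> r" "c = t * cf_q \<theta> k" for c t
  proof (intro conjI)
    have "c + cf_q \<theta> k = (t + 1) * cf_q \<theta> k" using that by simp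
    also have "\<dots> \<le> (r + 1) * cf_q \<theta> k" using that by (intro mult_right_mono) auto
    finally show "c + cf_q \<theta> k \<le> cf_q \<theta> (k + 1)" using rq by linarith
    have "real c * \<theta> - of_int (int t * cf_p \<theta> k) = real t * (real (cf_q \<theta> k) * \<theta> - of_int (cf_p \<theta> k))"
      using that by (simp add: algebra_simps)
    then show "real c * \<theta> - of_int (int t * cf_p \<theta> k) = real t * PP \<theta> k" using ek by simp
    show "real t * PP \<theta> k \<le> real r * PP \<theta> k" using that P0 by (intro mult_right_mono) auto
    show "0 \<le> real t * PP \<theta> k" using P0 by simp
  qed
  have finT: "finite T" unfolding T_def by simp
  have cardT: "card T = r + 1"
  proof -
    have "inj_on (\<lambda>t. t * cf_q \<theta> k) {0..r}" using qk by (auto simp: inj_on_def)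
    then show ?thesis unfolding T_def by (simp add: card_image)
  qed
  have Tlt: "c < cf_q \<theta> (k + 1)" if "c \<in> T" for c
    using that Tel qk unfolding T_def by fastforce
  define LoA where "LoA = PP \<theta> k"
  define HiA where "HiA = real r * PP \<theta> k + PP \<theta> (k + 1)"
  define BA where "BA = insert (cf_q \<theta> (k + 1)) T"
  have gA: "\<forall>c\<in>T. good \<theta> k LoA HiA 0 c"
  proof
    fix c assume "c \<in> T"
    then obtain t where t: "t \<le> r" "c = t * cf_q \<theta> k" unfolding T_def by auto
    have f: "c + cf_q \<theta> k \<le> cf_q \<theta> (k + 1)"
      "real c * \<theta> - of_int (int t * cf_p \<theta> k) = real t * PP \<theta> k"
      "real t * PP \<theta> k \<le> real r * PP \<theta> k" "0 \<le> real t * PP \<theta> k"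
      using Tel[OF t] by auto
    have e0: "k + 0 + 1 = k + 1" by simp
    show "good \<theta> k LoA HiA 0 c" unfolding good_def e0
    proof (intro conjI exI[of _ "int t * cf_p \<theta> k"])
      show "c + cf_q \<theta> k \<le> cf_q \<theta> (k + 1)" by (rule f(1))
      show "- LoA + PP \<theta> (k + 1) \<le> real c * \<theta> - of_int (int t * cf_p \<theta> k)"
        unfolding f(2) using f(4) P0 unfolding LoA_def by linarith
      show "real c * \<theta> - of_int (int t * cf_p \<theta> k) \<le> HiA - PP \<theta> (k + 1)"
        unfolding f(2) using f(3) P0 unfolding HiA_def by linarith
    qed
  qed
  have gB: "\<forall>c\<in>BA. good \<theta> k LoA HiA 1 c"
  proof
    fix c assume c: "c \<in> BA"
    show "good \<theta> k LoA HiA 1 c"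
    proof (cases "c \<in> T")
      case True then show ?thesis using gA good_mono[OF th] by fastforce
    next
      case False
      then have c1: "c = cf_q \<theta> (k + 1)" using c BA_def by auto
      have "0 \<le> real r * PP \<theta> k" using P0 by simp
      then have nn: "0 \<le> real r * PP \<theta> k" .
      have e1: "k + 1 + 1 = k + 2" by simp
      show ?thesis unfolding good_def c1 e1
      proof (intro conjI exI[of _ "cf_p \<theta> (k + 1)"])
        show "cf_q \<theta> (k + 1) + cf_q \<theta> k \<le> cf_q \<theta> (k + 2)" by (rule q2ge)
        show "- LoA + PP \<theta> (k + 2) \<le> real (cf_q \<theta> (k + 1)) * \<theta> - of_int (cf_p \<theta> (k + 1))"
          unfolding ek1 LoA_def using Prec by linarith
        show "real (cf_q \<theta> (k + 1)) * \<theta> - of_int (cf_p \<theta> (k + 1)) \<le> HiA - PP \<theta> (k + 2)"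
          unfolding ek1 HiA_def using nn P0 by linarith
      qed
    qed
  qed
  have finBA: "finite BA" using finT BA_def by simp
  have cardBA: "card BA = r + 2"
  proof -
    have "cf_q \<theta> (k + 1) \<notin> T" using Tlt by blast
    then show ?thesis using finT cardT BA_def by simp
  qed
  have cardXA: "card (xs Q T BA s) = fib (s + 1) * r + fib (s + 2)" for s
  proof (induction s rule: fib.induct)
    case 1 then show ?case using cardT by (simp add: numeral_eq_Suc)
  next
    case 2 then show ?case using cardBA by (simp add: numeral_eq_Suc)
  next
    case (3 n)
    have "card (xs Q T BA (Suc (Suc n))) = card (xs Q T BA (Suc n)) + card (xs Q T BA n)"
      unfolding Q_def by (rule xs_card[OF th finT finBA gA gB])
    then show ?case using 3 by (simp add: numeral_eq_Suc algebra_simps)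
  qed
  have partA: "card {j \<in> {1..cf_q \<theta> (k + l)}. torus_in (real j * \<theta>) (real i * \<theta>) LoA HiA}
      \<ge> fib l * r + fib (l + 1)"
  proof -
    have "card {j \<in> {1..cf_q \<theta> (k + l)}. torus_in (real j * \<theta>) (real i * \<theta>) LoA HiA} \<ge> card (xs Q T BA (l - 1))"
      unfolding Q_def by (rule count_ge[OF th finT finBA gA gB assms(6-8)])
    moreover have "l - 1 + 1 = l" "l - 1 + 2 = l + 1" using assms(6) by auto
    ultimately show ?thesis using cardXA[of "l - 1"] by simp
  qed
  define LoB where "LoB = PP \<theta> (k + 1) + PP \<theta> (k + 2)"
  define BB where "BB = T \<union> (\<lambda>c. cf_q \<theta> (k + 1) + c) ` T"
  have gAb: "\<forall>c\<in>T. good \<theta> k LoB HiA 0 c"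
  proof
    fix c assume "c \<in> T"
    then obtain t where t: "t \<le> r" "c = t * cf_q \<theta> k" unfolding T_def by auto
    have f: "c + cf_q \<theta> k \<le> cf_q \<theta> (k + 1)"
      "real c * \<theta> - of_int (int t * cf_p \<theta> k) = real t * PP \<theta> k"
      "real t * PP \<theta> k \<le> real r * PP \<theta> k" "0 \<le> real t * PP \<theta> k"
      using Tel[OF t] by auto
    have e0: "k + 0 + 1 = k + 1" by simp
    show "good \<theta> k LoB HiA 0 c" unfolding good_def e0
    proof (intro conjI exI[of _ "int t * cf_p \<theta> k"])
      show "c + cf_q \<theta> k \<le> cf_q \<theta> (k + 1)" by (rule f(1))
      show "- LoB + PP \<theta> (k + 1) \<le> real c * \<theta> - of_int (int t * cf_p \<theta> k)"
        unfolding f(2) using f(4) P0 unfolding LoB_def by linarith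
      show "real c * \<theta> - of_int (int t * cf_p \<theta> k) \<le> HiA - PP \<theta> (k + 1)"
        unfolding f(2) using f(3) P0 unfolding HiA_def by linarith
    qed
  qed
  have partB: "cf_a \<theta> (k + 2) = 2 \<Longrightarrow>
      card {j \<in> {1..cf_q \<theta> (k + l)}. torus_in (real j * \<theta>) (real i * \<theta>) LoB HiA}
      \<ge> fib (l + 1) * (r + 1)"
  proof -
    assume a22: "cf_a \<theta> (k + 2) = 2"
    have gBb: "\<forall>c\<in>BB. good \<theta> k LoB HiA 1 c"
    proof
      fix c assume c: "c \<in> BB"
      show "good \<theta> k LoB HiA 1 c"
      proof (cases "c \<in> T")
        case True then show ?thesis using gAb good_mono[OF th] by fastforce
      next
        case False
        then obtain t where t: "t \<le> r" and c1: "c = cf_q \<theta> (k + 1) + t * cf_q \<theta> k"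
          using c BB_def T_def by auto
        have tt: "t * cf_q \<theta> k + cf_q \<theta> k \<le> cf_q \<theta> (k + 1)" using Tel[OF t refl] by simp
        have rng: "c + cf_q \<theta> k \<le> cf_q \<theta> (k + 1 + 1)"
          using tt q2 a22 c1 by (simp add: numeral_eq_Suc)
        have v: "real c * \<theta> - of_int (cf_p \<theta> (k + 1) + int t * cf_p \<theta> k) = - PP \<theta> (k + 1) + real t * PP \<theta> k"
        proof -
          have "real c * \<theta> - of_int (cf_p \<theta> (k + 1) + int t * cf_p \<theta> k) =
            (real (cf_q \<theta> (k + 1)) * \<theta> - of_int (cf_p \<theta> (k + 1))) + (real (t * cf_q \<theta> k) * \<theta> - of_int (int t * cf_p \<theta> k))"
            using c1 by (simp add: algebra_simps)
          then show ?thesis using ek1 Tel[OF t refl] by simp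
        qed
        have f: "real t * PP \<theta> k \<le> real r * PP \<theta> k" "0 \<le> real t * PP \<theta> k"
          using Tel[OF t refl] by blast+
        have m1: "- LoB + PP \<theta> (k + 2) \<le> - PP \<theta> (k + 1) + real t * PP \<theta> k"
          unfolding LoB_def using f by linarith
        have m2: "- PP \<theta> (k + 1) + real t * PP \<theta> k \<le> HiA - PP \<theta> (k + 2)"
          unfolding HiA_def using f P0 by linarith
        have e1: "k + 1 + 1 = k + 2" by simp
        show ?thesis unfolding good_def e1
        proof (intro conjI exI[of _ "cf_p \<theta> (k + 1) + int t * cf_p \<theta> k"])
          show "c + cf_q \<theta> k \<le> cf_q \<theta> (k + 2)" using rng unfolding e1 .
          show "- LoB + PP \<theta> (k + 2) \<le> real c * \<theta> - of_int (cf_p \<theta> (k + 1) + int t * cf_p \<theta> k)"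
            unfolding v by (rule m1)
          show "real c * \<theta> - of_int (cf_p \<theta> (k + 1) + int t * cf_p \<theta> k) \<le> HiA - PP \<theta> (k + 2)"
            unfolding v by (rule m2)
        qed
      qed
    qed
    have finBB: "finite BB" using finT BB_def by simp
    have cardBB: "card BB = 2 * (r + 1)"
    proof -
      have d: "T \<inter> (\<lambda>c. cf_q \<theta> (k + 1) + c) ` T = {}" using Tlt by fastforce
      have "card ((\<lambda>c. cf_q \<theta> (k + 1) + c) ` T) = card T" by (rule card_image) (simp add: inj_on_def)
      then show ?thesis using d finT cardT BB_def by (simp add: card_Un_disjoint)
    qed
    have cardXB: "card (xs Q T BB s) = fib (s + 2) * (r + 1)" for s
    proof (induction s rule: fib.induct)
      case 1 then show ?case using cardT by (simp add: numeral_eq_Suc)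
    next
      case 2 then show ?case using cardBB by (simp add: numeral_eq_Suc)
    next
      case (3 n)
      have "card (xs Q T BB (Suc (Suc n))) = card (xs Q T BB (Suc n)) + card (xs Q T BB n)"
        unfolding Q_def by (rule xs_card[OF th finT finBB gAb gBb])
      then show ?case using 3 by (simp add: numeral_eq_Suc algebra_simps)
    qed
    have "card {j \<in> {1..cf_q \<theta> (k + l)}. torus_in (real j * \<theta>) (real i * \<theta>) LoB HiA} \<ge> card (xs Q T BB (l - 1))"
      unfolding Q_def by (rule count_ge[OF th finT finBB gAb gBb assms(6-8)])
    moreover have "l - 1 + 2 = l + 1" using assms(6) by auto
    ultimately show ?thesis using cardXB[of "l - 1"] by simp
  qed
  show ?thesis
  proof (intro conjI impI)
    show "card {j \<in> {1..cf_q \<theta> (k + l)}.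
                   torus_in (real j * \<theta>) (real i * \<theta>) (dnint (real (cf_q \<theta> k) * \<theta>))
                     (real (cf_rt \<theta> (k + 1)) * dnint (real (cf_q \<theta> k) * \<theta>)
                       + dnint (real (cf_q \<theta> (k + 1)) * \<theta>))}
             \<ge> fib l * cf_rt \<theta> (k + 1) + fib (l + 1)"
      using partA unfolding dk dk1 LoA_def HiA_def r_def .
  next
    assume h: "cf_a \<theta> (k + 2) = 2 \<and> (\<forall>j. 3 \<le> j \<and> j \<le> l \<longrightarrow> cf_a \<theta> (k + j) = 1)"
    show "card {j \<in> {1..cf_q \<theta> (k + l)}.
                   torus_in (real j * \<theta>) (real i * \<theta>)
                     (dnint (real (cf_q \<theta> (k + 1)) * \<theta>) + dnint (real (cf_q \<theta> (k + 2)) * \<theta>))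
                     (real (cf_rt \<theta> (k + 1)) * dnint (real (cf_q \<theta> k) * \<theta>)
                       + dnint (real (cf_q \<theta> (k + 1)) * \<theta>))}
             \<ge> fib (l + 1) * (cf_rt \<theta> (k + 1) + 1)"
      using partB[OF conjunct1[OF h]] unfolding dk dk1 dk2 LoB_def HiA_def r_def .
  qed
qed

end
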